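(* Let $(L,d)$ be a metric locale without isolated points and let $a\in L$ with $a^*=0$. Then there exists $g\in L$ with $g^*\vee g^{**}\le a$.
   Context: A frame (locale) $L$ is a complete lattice in which finite meets distribute over arbitrary joins; $a^*$ denotes the pseudocomplement of $a$. A diameter on $L$ is a map $d\colon L\to[0,+\infty]$ with (D1) $d(0)=0$; (D2) $a\le b\Rightarrow d(a)\le d(b)$; (D3) $a\wedge b\neq 0\Rightarrow d(a\vee b)\le d(a)+d(b)$; (D4) for every $\varepsilon>0$, $\bigvee\{a\in L\mid d(a)<\varepsilon\}=1$. Write $b\lhd_\varepsilon a$ if for every $c\in L$ with $d(c)<\varepsilon$, $c\wedge b\ne0$ implies $c\le a$. The diameter is admissible if $a=\bigvee\{b\in L\mid b\lhd_\varepsilon a \text{ for some }\varepsilon>0\}$ for all $a\in L$; a metric locale is a pair $(L,d)$ with $d$ an admissible diameter. A sublocale of $L$ is a subset closed under arbitrary meets such that $x\to s$ lies in it whenever $s$ does ($\to$ the Heyting implication); the open sublocale of $x$ is $\mathfrak{o}(x)=\{x\to y\mid y\in L\}$. A point of $L$ is $p\ne1$ such that $x\wedge y\le p$ implies $x\le p$ or $y\le p$; it is isolated if the sublocale $\{1,p\}$ equals $\mathfrak{o}(x)$ for some $x\in L$. *)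

theory Defs
  imports Main "HOL-Library.Extended_Nonnegative_Real"
begin

definition frame :: "'a::complete_lattice itself \<Rightarrow> bool" where
  "frame _ \<longleftrightarrow> (\<forall>(a::'a) S. inf a (Sup S) = Sup ((\<lambda>s. inf a s) ` S))"

definition pcompl :: "'a::complete_lattice \<Rightarrow> 'a" where
  "pcompl a = Sup {x. inf x a = bot}"

definition himp :: "'a::complete_lattice \<Rightarrow> 'a \<Rightarrow> 'a" where
  "himp x y = Sup {z. inf z x \<le> y}"

definition diameter :: "('a::complete_lattice \<Rightarrow> ennreal) \<Rightarrow> bool" where
  "diameter d \<longleftrightarrow>
     d bot = 0 \<and>
     (\<forall>a b. a \<le> b \<longrightarrow> d a \<le> d b) \<and>
     (\<forall>a b. inf a b \<noteq> bot \<longrightarrow> d (sup a b) \<le> d a + d b) \<and>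
     (\<forall>\<epsilon>::real. \<epsilon> > 0 \<longrightarrow> Sup {a. d a < ennreal \<epsilon>} = top)"

definition wbelow :: "('a::complete_lattice \<Rightarrow> ennreal) \<Rightarrow> real \<Rightarrow> 'a \<Rightarrow> 'a \<Rightarrow> bool" where
  "wbelow d \<epsilon> b a \<longleftrightarrow> (\<forall>c. d c < ennreal \<epsilon> \<longrightarrow> inf c b \<noteq> bot \<longrightarrow> c \<le> a)"

definition admissible :: "('a::complete_lattice \<Rightarrow> ennreal) \<Rightarrow> bool" where
  "admissible d \<longleftrightarrow> (\<forall>a. a = Sup {b. \<exists>\<epsilon>::real. \<epsilon> > 0 \<and> wbelow d \<epsilon> b a})"

definition metric_locale :: "('a::complete_lattice \<Rightarrow> ennreal) \<Rightarrow> bool" where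
  "metric_locale d \<longleftrightarrow> frame TYPE('a) \<and> diameter d \<and> admissible d"

definition open_sublocale :: "'a::complete_lattice \<Rightarrow> 'a set" where
  "open_sublocale x = {himp x y | y. True}"

definition is_point :: "'a::complete_lattice \<Rightarrow> bool" where
  "is_point p \<longleftrightarrow> p \<noteq> top \<and> (\<forall>x y. inf x y \<le> p \<longrightarrow> x \<le> p \<or> y \<le> p)"

definition isolated_point :: "'a::complete_lattice \<Rightarrow> bool" where
  "isolated_point p \<longleftrightarrow> is_point p \<and> (\<exists>x. {top, p} = open_sublocale x)"

end

theory Submission
  imports Defs
begin

lemma fr_dist:
  fixes a :: "'a::complete_lattice"
  assumes "frame TYPE('a)"
  shows "inf a (Sup S) = Sup ((\<lambda>s. inf a s) ` S)"
  using assms unfolding frame_def by blast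

lemma fr_meet_Sup:
  fixes a :: "'a::complete_lattice"
  assumes "frame TYPE('a)" and "inf a (Sup S) \<noteq> bot"
  shows "\<exists>s\<in>S. inf a s \<noteq> bot"
  using assms fr_dist[OF assms(1), of a S] by (auto simp: Sup_bot_conv)

lemma pc_le:
  fixes x :: "'a::complete_lattice"
  assumes "inf x a = bot"
  shows "x \<le> pcompl a"
  unfolding pcompl_def using assms by (auto intro: Sup_upper)

lemma inf_pc:
  fixes a :: "'a::complete_lattice"
  assumes "frame TYPE('a)"
  shows "inf a (pcompl a) = bot"
  unfolding pcompl_def fr_dist[OF assms] by (auto simp: Sup_bot_conv inf_commute)

lemma split_lemma:
  fixes d :: "'a::complete_lattice \<Rightarrow> ennreal" and c :: 'a
  assumes fr: "frame TYPE('a)" and dia: "diameter d" and adm: "admissible d"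
    and noiso: "\<forall>p::'a. \<not> isolated_point p" and cnz: "c \<noteq> bot"
  shows "\<exists>c1 c2. c1 \<le> c \<and> c2 \<le> c \<and> c1 \<noteq> bot \<and> c2 \<noteq> bot \<and> inf c1 c2 = bot"
proof (rule ccontr)
  assume H: "\<not> ?thesis"
  have dich: "inf c y = bot \<or> c \<le> y" for y
  proof (rule ccontr)
    assume "\<not> (inf c y = bot \<or> c \<le> y)"
    hence ny: "inf c y \<noteq> bot" and ncy: "\<not> c \<le> y" by auto
    define y' where "y' = inf c y"
    have "y' = Sup {b. \<exists>\<epsilon>::real. \<epsilon> > 0 \<and> wbelow d \<epsilon> b y'}"
      using adm unfolding admissible_def by blast
    moreover have "y' \<noteq> bot" using ny unfolding y'_def .
    ultimately have "Sup {b. \<exists>\<epsilon>::real. \<epsilon> > 0 \<and> wbelow d \<epsilon> b y'} \<noteq> bot" by simp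
    then obtain b where "b \<in> {b. \<exists>\<epsilon>::real. \<epsilon> > 0 \<and> wbelow d \<epsilon> b y'}" "b \<noteq> bot"
      unfolding Sup_bot_conv by blast
    hence "b \<noteq> bot" and "\<exists>\<epsilon>::real. \<epsilon> > 0 \<and> wbelow d \<epsilon> b y'" by auto
    then obtain \<epsilon> :: real where bnz: "b \<noteq> bot" and ep: "\<epsilon> > 0" and wb: "wbelow d \<epsilon> b y'" by blast
    have top: "Sup {e. d e < ennreal \<epsilon>} = top" using dia ep unfolding diameter_def by blast
    have "\<exists>e. d e < ennreal \<epsilon> \<and> \<not> inf c e \<le> y'"
    proof (rule ccontr)
      assume "\<not> ?thesis"
      hence "Sup ((\<lambda>s. inf c s) ` {e. d e < ennreal \<epsilon>}) \<le> y'" by (auto intro: Sup_least)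
      hence "c \<le> y'" using fr_dist[OF fr, of c "{e. d e < ennreal \<epsilon>}"] top by simp
      thus False using ncy unfolding y'_def by auto
    qed
    then obtain e where de: "d e < ennreal \<epsilon>" and nle: "\<not> inf c e \<le> y'" by blast
    have "d (inf c e) \<le> d e" using dia unfolding diameter_def by auto
    hence "d (inf c e) < ennreal \<epsilon>" using de by auto
    hence "inf (inf c e) b = bot" using wb nle unfolding wbelow_def by blast
    moreover have "b \<le> y'"
      using \<open>y' = Sup {b. \<exists>\<epsilon>::real. \<epsilon> > 0 \<and> wbelow d \<epsilon> b y'}\<close> ep wb
      by (metis (mono_tags, lifting) Sup_upper mem_Collect_eq)
    hence "b \<le> c" unfolding y'_def by auto
    moreover have "inf c e \<noteq> bot" using nle by auto
    moreover have "inf c e \<le> c" by simp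
    ultimately have "b \<le> c \<and> inf c e \<le> c \<and> b \<noteq> bot \<and> inf c e \<noteq> bot \<and> inf b (inf c e) = bot"
      using bnz by (simp add: inf_commute)
    thus False using H by blast
  qed
  define p where "p = pcompl c"
  have cp: "inf c p = bot" using inf_pc[OF fr] p_def by simp
  have "p \<noteq> top" using cp cnz by auto
  moreover have "inf x y \<le> p \<longrightarrow> x \<le> p \<or> y \<le> p" for x y
  proof
    assume xy: "inf x y \<le> p"
    show "x \<le> p \<or> y \<le> p"
    proof (rule ccontr)
      assume "\<not> ?thesis"
      hence "\<not> x \<le> p" "\<not> y \<le> p" by auto
      hence "inf x c \<noteq> bot" "inf y c \<noteq> bot" using pc_le[of x c] pc_le[of y c] unfolding p_def by auto
      hence "inf c x \<noteq> bot" "inf c y \<noteq> bot" by (simp_all add: inf_commute)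
      hence "c \<le> x" "c \<le> y" using dich by auto
      hence "c \<le> p" using xy by (meson le_inf_iff order_trans)
      thus False using cp cnz by (simp add: inf_absorb1)
    qed
  qed
  ultimately have pt: "is_point p" unfolding is_point_def by blast
  have eqb: "{z. inf z c \<le> bot} = {z. inf z c = bot}" by (auto simp: bot_unique)
  have "open_sublocale c = {top, p}"
  proof
    show "open_sublocale c \<subseteq> {top, p}"
    proof
      fix w assume "w \<in> open_sublocale c"
      then obtain y where w: "w = himp c y" unfolding open_sublocale_def by blast
      show "w \<in> {top, p}"
      proof (cases "c \<le> y")
        case True
        hence "top \<in> {z. inf z c \<le> y}" by simp
        hence "w = top" unfolding w himp_def by (simp add: Sup_upper top_le)
        thus ?thesis by simp
      next
        case False
        hence "inf c y = bot" using dich by auto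
        hence "{z. inf z c \<le> y} = {z. inf z c = bot}"
        proof (intro Collect_cong iffI)
          fix z assume "inf z c \<le> y"
          hence "inf z c \<le> inf c y" by simp
          thus "inf z c = bot" using \<open>inf c y = bot\<close> by (simp add: bot_unique)
        qed simp
        hence "w = p" unfolding w himp_def p_def pcompl_def by (simp add: inf_commute)
        thus ?thesis by simp
      qed
    qed
  next
    have "himp c top = top" unfolding himp_def by (simp add: Sup_upper top_le)
    moreover have "himp c bot = p" unfolding himp_def p_def pcompl_def eqb by (simp add: inf_commute)
    moreover have "\<And>y. himp c y \<in> open_sublocale c" unfolding open_sublocale_def by blast
    ultimately show "{top, p} \<subseteq> open_sublocale c" by (metis empty_subsetI insert_subset)
  qed
  hence "isolated_point p" using pt unfolding isolated_point_def by (intro conjI exI[of _ c]) auto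
  thus False using noiso by blast
qed


lemma meet_mono:
  fixes c :: "'a::complete_lattice"
  assumes "inf c x \<noteq> bot" and "x \<le> y"
  shows "inf c y \<noteq> bot"
proof
  assume "inf c y = bot"
  moreover have "inf c x \<le> inf c y" using assms(2) by (simp add: le_infI2)
  ultimately show False using assms(1) by (simp add: bot_unique)
qed

lemma wbelow_anti:
  assumes "wbelow d e f2 a" and "f1 \<le> f2"
  shows "wbelow d e f1 a"
  unfolding wbelow_def
proof (intro allI impI)
  fix c assume "d c < ennreal e" "inf c f1 \<noteq> bot"
  then have "inf c f2 \<noteq> bot" using meet_mono assms(2) by blast
  thus "c \<le> a" using assms(1) \<open>d c < ennreal e\<close> unfolding wbelow_def by blast
qed

lemma exists_piece:
  fixes b :: "'a::complete_lattice"
  assumes fr: "frame TYPE('a)" and top: "Sup S = top" and nle: "\<not> b \<le> a"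
  shows "\<exists>e\<in>S. \<not> inf b e \<le> a"
proof (rule ccontr)
  assume "\<not> ?thesis"
  hence "Sup ((\<lambda>s. inf b s) ` S) \<le> a" by (auto intro: Sup_least)
  hence "b \<le> a" using fr_dist[OF fr, of b S] top by simp
  thus False using nle by simp
qed

theorem corollary5p5:
  fixes d :: "'a::complete_lattice \<Rightarrow> ennreal" and a :: 'a
  assumes "metric_locale d"
    and "\<forall>p::'a. \<not> isolated_point p"
    and "pcompl a = bot"
  shows "\<exists>g::'a. sup (pcompl g) (pcompl (pcompl g)) \<le> a"
proof -
  have fr: "frame TYPE('a)" and dia: "diameter d" and adm: "admissible d"
    using assms(1) unfolding metric_locale_def by auto
  have dmono: "\<And>x y. x \<le> y \<Longrightarrow> d x \<le> d y" using dia unfolding diameter_def by auto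
  have dtri: "\<And>x y. inf x y \<noteq> bot \<Longrightarrow> d (sup x y) \<le> d x + d y" using dia unfolding diameter_def by auto
  have dcov: "\<And>\<epsilon>::real. \<epsilon> > 0 \<Longrightarrow> Sup {x. d x < ennreal \<epsilon>} = top" using dia unfolding diameter_def by auto
  have admx: "\<And>x. x = Sup {b. \<exists>\<epsilon>::real. \<epsilon> > 0 \<and> wbelow d \<epsilon> b x}" using adm unfolding admissible_def by blast
  define C where "C = {f. f \<noteq> bot \<and> (\<exists>\<epsilon>::real. \<epsilon> > 0 \<and> d f < ennreal (\<epsilon>/2) \<and> wbelow d \<epsilon> f a)}"
  define A where "A = {F. F \<subseteq> C \<and> (\<forall>x\<in>F. \<forall>y\<in>F. x \<noteq> y \<longrightarrow> inf x y = bot)}"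
  have "\<forall>Ch\<in>chains A. \<Union>Ch \<in> A"
  proof
    fix Ch assume ch: "Ch \<in> chains A"
    have sub: "Ch \<subseteq> A" and cs: "\<And>X Y. X \<in> Ch \<Longrightarrow> Y \<in> Ch \<Longrightarrow> X \<subseteq> Y \<or> Y \<subseteq> X"
      using ch unfolding chains_def chain_subset_def by auto
    have "\<Union>Ch \<subseteq> C" using sub unfolding A_def by auto
    moreover have "\<forall>x\<in>\<Union>Ch. \<forall>y\<in>\<Union>Ch. x \<noteq> y \<longrightarrow> inf x y = bot"
    proof (intro ballI impI)
      fix x y assume "x \<in> \<Union>Ch" "y \<in> \<Union>Ch" "x \<noteq> y"
      then obtain X Y where XY: "X \<in> Ch" "Y \<in> Ch" "x \<in> X" "y \<in> Y" by blast
      then consider "X \<subseteq> Y" | "Y \<subseteq> X" using cs by blast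
      thus "inf x y = bot"
      proof cases
        case 1 thus ?thesis using XY sub \<open>x \<noteq> y\<close> unfolding A_def by blast
      next
        case 2 thus ?thesis using XY sub \<open>x \<noteq> y\<close> unfolding A_def by blast
      qed
    qed
    ultimately show "\<Union>Ch \<in> A" unfolding A_def by blast
  qed
  then obtain M where MA: "M \<in> A" and Mmax: "\<forall>X\<in>A. M \<subseteq> X \<longrightarrow> X = M"
    using Zorn_Lemma by blast
  have MC: "M \<subseteq> C" and Mdisj: "\<And>x y. x \<in> M \<Longrightarrow> y \<in> M \<Longrightarrow> x \<noteq> y \<Longrightarrow> inf x y = bot"
    using MA unfolding A_def by auto
  have "\<forall>c\<in>M. \<exists>c1 c2. c1 \<le> c \<and> c2 \<le> c \<and> c1 \<noteq> bot \<and> c2 \<noteq> bot \<and> inf c1 c2 = bot"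
  proof
    fix c assume "c \<in> M"
    hence "c \<noteq> bot" using MC unfolding C_def by auto
    thus "\<exists>c1 c2. c1 \<le> c \<and> c2 \<le> c \<and> c1 \<noteq> bot \<and> c2 \<noteq> bot \<and> inf c1 c2 = bot"
      using split_lemma[OF fr dia adm assms(2)] by blast
  qed
  hence "\<forall>c\<in>M. \<exists>q. fst q \<le> c \<and> snd q \<le> c \<and> fst q \<noteq> bot \<and> snd q \<noteq> bot \<and> inf (fst q) (snd q) = bot"
    by simp
  then obtain q where qq: "\<forall>c\<in>M. fst (q c) \<le> c \<and> snd (q c) \<le> c \<and> fst (q c) \<noteq> bot \<and> snd (q c) \<noteq> bot \<and> inf (fst (q c)) (snd (q c)) = bot"
    by (rule bchoice[elim_format]) blast
  define f1 where "f1 c = fst (q c)" for c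
  define f2 where "f2 c = snd (q c)" for c
  have ff: "\<forall>c\<in>M. f1 c \<le> c \<and> f2 c \<le> c \<and> f1 c \<noteq> bot \<and> f2 c \<noteq> bot \<and> inf (f1 c) (f2 c) = bot"
    using qq unfolding f1_def f2_def by blast
  define g where "g = Sup (f1 ` M)"
  have key: "x \<le> a" if h1: "\<forall>c\<in>M. \<exists>c'. c' \<le> c \<and> c' \<noteq> bot \<and> c' \<le> h" and h2: "inf x h = bot" for x h
  proof (rule ccontr)
    assume nxa: "\<not> x \<le> a"
    have "\<exists>b\<in>{b. \<exists>\<epsilon>::real. \<epsilon> > 0 \<and> wbelow d \<epsilon> b x}. \<not> b \<le> a"
    proof (rule ccontr)
      assume "\<not> ?thesis"
      hence "Sup {b. \<exists>\<epsilon>::real. \<epsilon> > 0 \<and> wbelow d \<epsilon> b x} \<le> a" by (auto intro: Sup_least)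
      thus False using admx[of x] nxa by simp
    qed
    then obtain b and \<delta> :: real where dpos: "\<delta> > 0" and wbx: "wbelow d \<delta> b x" and nba: "\<not> b \<le> a" by blast
    obtain e where de: "d e < ennreal \<delta>" and nbe: "\<not> inf b e \<le> a"
      using exists_piece[OF fr dcov[OF dpos] nba] by blast
    define b0 where "b0 = inf b e"
    have db0: "d b0 < ennreal \<delta>" using dmono[of b0 e] de unfolding b0_def by simp
    have nb0: "\<not> b0 \<le> a" using nbe b0_def by simp
    have "inf b0 a \<noteq> bot"
    proof
      assume "inf b0 a = bot"
      hence "b0 \<le> bot" using pc_le[of b0 a] assms(3) by simp
      thus False using nb0 by (simp add: bot_unique)
    qed
    hence "inf b0 (Sup {b. \<exists>\<epsilon>::real. \<epsilon> > 0 \<and> wbelow d \<epsilon> b a}) \<noteq> bot" using admx[of a] by simp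
    then obtain e' where "e' \<in> {b. \<exists>\<epsilon>::real. \<epsilon> > 0 \<and> wbelow d \<epsilon> b a}" and b0e: "inf b0 e' \<noteq> bot"
      using fr_meet_Sup[OF fr] by blast
    then obtain \<epsilon> :: real where epos: "\<epsilon> > 0" and wbe: "wbelow d \<epsilon> e' a" by blast
    have "inf (inf b0 e') (Sup {x. d x < ennreal (\<epsilon>/2)}) \<noteq> bot" using dcov[of "\<epsilon>/2"] epos b0e by simp
    then obtain hh where dhh: "d hh < ennreal (\<epsilon>/2)" and fnz: "inf (inf b0 e') hh \<noteq> bot"
      using fr_meet_Sup[OF fr] by blast
    define f where "f = inf (inf b0 e') hh"
    have fhh: "f \<le> hh" unfolding f_def by (rule inf_le2)
    have fe': "f \<le> e'" unfolding f_def by (meson inf_le1 inf_le2 order_trans)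
    have df: "d f < ennreal (\<epsilon>/2)" using dmono[OF fhh] dhh by (rule le_less_trans)
    have wf: "wbelow d \<epsilon> f a" using wbelow_anti[OF wbe fe'] .
    have fnz': "f \<noteq> bot" using fnz unfolding f_def .
    have fC: "f \<in> C" unfolding C_def using fnz' epos df wf by blast
    have "\<exists>c\<in>M. inf c f \<noteq> bot"
    proof (rule ccontr)
      assume nn: "\<not> ?thesis"
      have "insert f M \<in> A" using MA fC nn unfolding A_def by (auto simp: inf_commute)
      hence "insert f M = M" using Mmax by blast
      hence "f \<in> M" by blast
      thus False using nn fnz f_def by auto
    qed
    then obtain c where cM: "c \<in> M" and cf: "inf c f \<noteq> bot" by blast
    obtain \<epsilon>c :: real where ecpos: "\<epsilon>c > 0" and dc: "d c < ennreal (\<epsilon>c/2)" and wbc: "wbelow d \<epsilon>c c a"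
      using cM MC unfolding C_def by auto
    have fb0: "f \<le> b0" unfolding f_def by (meson inf_le1 order_trans)
    have cb0: "inf c b0 \<noteq> bot" using cf fb0 by (rule meet_mono)
    have cb: "inf c b \<noteq> bot" using cb0 unfolding b0_def by (rule meet_mono) simp
    show False
    proof (cases "\<delta> \<le> \<epsilon>c/2")
      case True
      have "d (sup c b0) \<le> d c + d b0" using dtri[OF cb0] .
      also have "\<dots> < ennreal (\<epsilon>c/2) + ennreal \<delta>" using dc db0 by (rule add_strict_mono)
      also have "\<dots> = ennreal (\<epsilon>c/2 + \<delta>)" using ecpos dpos by simp
      also have "\<dots> \<le> ennreal \<epsilon>c" using True by (intro ennreal_leI) simp
      finally have "d (sup c b0) < ennreal \<epsilon>c" .
      moreover have "inf (sup c b0) c \<noteq> bot" using cM MC unfolding C_def by (auto simp: inf_absorb2)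
      ultimately have "sup c b0 \<le> a" using wbc unfolding wbelow_def by blast
      thus False using nb0 by simp
    next
      case False
      hence "\<epsilon>c/2 \<le> \<delta>" by simp
      hence "d c < ennreal \<delta>" using dc by (meson ennreal_leI less_le_trans)
      hence "c \<le> x" using wbx cb unfolding wbelow_def by blast
      obtain c' where "c' \<le> c" "c' \<noteq> bot" "c' \<le> h" using h1 cM by blast
      hence "c' \<le> inf x h" using \<open>c \<le> x\<close> by (meson le_inf_iff order_trans)
      thus False using h2 \<open>c' \<noteq> bot\<close> by (simp add: bot_unique)
    qed
  qed
  have g1: "\<forall>c\<in>M. \<exists>c'. c' \<le> c \<and> c' \<noteq> bot \<and> c' \<le> g"
  proof
    fix c assume cM: "c \<in> M"
    have "f1 c \<le> g" unfolding g_def using cM by (rule SUP_upper)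
    thus "\<exists>c'. c' \<le> c \<and> c' \<noteq> bot \<and> c' \<le> g" using ff cM by blast
  qed
  have g2: "\<forall>c\<in>M. \<exists>c'. c' \<le> c \<and> c' \<noteq> bot \<and> c' \<le> pcompl g"
  proof
    fix c assume cM: "c \<in> M"
    have "inf (f2 c) g = bot"
      unfolding g_def fr_dist[OF fr] Sup_bot_conv
    proof
      fix y assume "y \<in> (\<lambda>s. inf (f2 c) s) ` f1 ` M"
      then obtain c2 where c2: "c2 \<in> M" "y = inf (f2 c) (f1 c2)" by blast
      show "y = bot"
      proof (cases "c2 = c")
        case True thus ?thesis using c2 ff cM by (simp add: inf_commute)
      next
        case False
        have "y \<le> inf c c2" using c2 ff cM by (meson inf_mono)
        thus ?thesis using Mdisj[OF cM c2(1)] False by (simp add: bot_unique)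
      qed
    qed
    thus "\<exists>c'. c' \<le> c \<and> c' \<noteq> bot \<and> c' \<le> pcompl g" using pc_le ff cM by blast
  qed
  have "pcompl g \<le> a" using key[OF g1, of "pcompl g"] inf_pc[OF fr, of g] by (simp add: inf_commute)
  moreover have "pcompl (pcompl g) \<le> a" using key[OF g2, of "pcompl (pcompl g)"] inf_pc[OF fr, of "pcompl g"]
    by (simp add: inf_commute)
  ultimately show ?thesis by auto
qed

end
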